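(* Let $n\ge 2$, $F$ the free group on $g_1,\dots,g_n$, $F^{(1)}=[F,F]$, $F^{(2)}=[F^{(1)},F^{(1)}]$, $\Lambda_n=\mathbb{Z}[t_1,t_1^{-1},\dots,t_n,t_n^{-1}]$, and let $\mu_1:F\to \mathrm{SL}(2,\Lambda_n)$ be the group homomorphism with $\mu_1(g_i)=\begin{bmatrix} t_i&0\\ 1&t_i^{-1}\end{bmatrix}$ for $1\le i\le n$. Let $w\in F^{(1)}\setminus F^{(2)}$. Then there exists a nonzero Laurent polynomial $\mathcal{L}_w\in\Lambda_n$ such that $$\mu_1(w)=\begin{bmatrix} 1&0\\ \mathcal{L}_w&1\end{bmatrix}.$$ *)

theory Defs
  imports "HOL-Library.Poly_Mapping" "HOL-Algebra.Generated_Groups"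
begin

text \<open>A letter (i, False) stands for g_i, (i, True) for its inverse g_i^{-1}.\<close>
type_synonym letter = "nat \<times> bool"

definition inv_letter :: "letter \<Rightarrow> letter" where
  "inv_letter l = (fst l, \<not> snd l)"

fun reduced :: "letter list \<Rightarrow> bool" where
  "reduced (a # b # w) = (b \<noteq> inv_letter a \<and> reduced (b # w))"
| "reduced _ = True"

definition reduce :: "letter list \<Rightarrow> letter list" where
  "reduce w = foldr (\<lambda>a acc. case acc of
       [] \<Rightarrow> [a]
     | b # r \<Rightarrow> (if b = inv_letter a then r else a # acc)) w []"

definition free_group :: "nat \<Rightarrow> letter list monoid" where
  "free_group n = \<lparr> carrier = {w. (\<forall>l \<in> set w. fst l \<in> {1..n}) \<and> reduced w},
                    mult = (\<lambda>x y. reduce (x @ y)),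
                    one = [] \<rparr>"

text \<open>Exponent vectors are finitely supported maps nat \<Rightarrow> int; variable t_i has exponent
  vector single i 1.  Lambda_n is the subring generated by t_1^{\<pm>1},...,t_n^{\<pm>1}.\<close>
type_synonym laurent = "(nat \<Rightarrow>\<^sub>0 int) \<Rightarrow>\<^sub>0 int"

definition lvar :: "nat \<Rightarrow> int \<Rightarrow> laurent" where
  "lvar i k = Poly_Mapping.single (Poly_Mapping.single i k) 1"

type_synonym mat2 = "laurent \<times> laurent \<times> laurent \<times> laurent"
  \<comment> \<open>(a, b, c, d) stands for the matrix [[a, b], [c, d]]\<close>

definition mat2_mult :: "mat2 \<Rightarrow> mat2 \<Rightarrow> mat2" where
  "mat2_mult M N = (case M of (a, b, c, d) \<Rightarrow> case N of (e, f, g, h) \<Rightarrow>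
      (a*e + b*g, a*f + b*h, c*e + d*g, c*f + d*h))"

definition mat2_id :: mat2 where "mat2_id = (1, 0, 0, 1)"

definition letter_mat :: "letter \<Rightarrow> mat2" where
  "letter_mat l = (if snd l then (lvar (fst l) (-1), 0, -1, lvar (fst l) 1)
                   else (lvar (fst l) 1, 0, 1, lvar (fst l) (-1)))"

definition mu1 :: "letter list \<Rightarrow> mat2" where
  "mu1 w = foldr (\<lambda>l M. mat2_mult (letter_mat l) M) w mat2_id"

end

theory Submission
  imports Defs
begin

definition rstep :: "letter \<Rightarrow> letter list \<Rightarrow> letter list" where
  "rstep a acc = (case acc of [] \<Rightarrow> [a] | b # r \<Rightarrow> (if b = inv_letter a then r else a # acc))"

lemma reduce_foldr: "reduce w = foldr rstep w []"
  unfolding reduce_def rstep_def by simp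

lemma inv_inv_letter[simp]: "inv_letter (inv_letter a) = a"
  by (simp add: inv_letter_def)

lemma inv_letter_eq_iff: "(inv_letter a = b) = (a = inv_letter b)"
  by (auto simp add: inv_letter_def)

lemma reduced_tl: "reduced (a # w) \<Longrightarrow> reduced w"
  by (cases w) auto

lemma reduced_rstep: "reduced acc \<Longrightarrow> reduced (rstep a acc)"
  by (cases acc) (auto simp: rstep_def intro: reduced_tl)

lemma reduced_foldr: "reduced acc \<Longrightarrow> reduced (foldr rstep x acc)"
  by (induction x) (auto intro: reduced_rstep)

lemma reduced_reduce: "reduced (reduce w)"
  by (simp add: reduce_foldr reduced_foldr)

lemma rstep_reduced: "reduced (a # w) \<Longrightarrow> rstep a w = a # w"
  by (cases w) (auto simp: rstep_def inv_letter_eq_iff)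

lemma reduce_reduced: "reduced w \<Longrightarrow> reduce w = w"
proof (induction w)
  case Nil then show ?case by (simp add: reduce_def)
next
  case (Cons a w)
  then show ?case by (simp add: reduce_foldr reduced_tl rstep_reduced)
qed

lemma rstep_cancel: "reduced s \<Longrightarrow> rstep a (rstep (inv_letter a) s) = s"
proof (cases s)
  case Nil then show ?thesis by (simp add: rstep_def)
next
  case (Cons c r)
  assume red: "reduced s"
  show ?thesis
  proof (cases "c = a")
    case True
    with red Cons have "reduced (a # r)" by simp
    then have "rstep a r = a # r" by (rule rstep_reduced)
    with True Cons show ?thesis by (simp add: rstep_def)
  next
    case False
    then show ?thesis using Cons by (simp add: rstep_def inv_letter_eq_iff)
  qed
qed

lemma foldr_rstep_step:
  assumes "reduced u" "reduced v"
  shows "foldr rstep (rstep a u) v = rstep a (foldr rstep u v)"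
proof (cases u)
  case Nil then show ?thesis by (simp add: rstep_def)
next
  case (Cons b r)
  show ?thesis
  proof (cases "b = inv_letter a")
    case True
    have "reduced (foldr rstep r v)" using assms Cons by (simp add: reduced_foldr reduced_tl)
    then have "rstep a (rstep (inv_letter a) (foldr rstep r v)) = foldr rstep r v"
      by (rule rstep_cancel)
    then show ?thesis using Cons True by (simp add: rstep_def)
  next
    case False
    then show ?thesis using Cons by (simp add: rstep_def)
  qed
qed

lemma foldr_rstep_assoc:
  assumes "reduced u" "reduced v"
  shows "foldr rstep (foldr rstep x u) v = foldr rstep x (foldr rstep u v)"
  using assms
proof (induction x)
  case Nil then show ?case by simp
next
  case (Cons a x)
  then show ?case by (simp add: foldr_rstep_step reduced_foldr)
qed

lemma reduce_append: "reduce (x @ y) = foldr rstep x (reduce y)"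
  by (simp add: reduce_foldr)

lemma set_rstep: "set (rstep a acc) \<subseteq> insert a (set acc)"
  by (cases acc) (auto simp: rstep_def)

lemma set_foldr_rstep: "set (foldr rstep x acc) \<subseteq> set x \<union> set acc"
  by (induction x) (use set_rstep in fastforce)+

lemma set_reduce: "set (reduce x) \<subseteq> set x"
  using set_foldr_rstep[of x "[]"] by (simp add: reduce_foldr)

lemma foldr_rstep_inv:
  assumes "reduced x"
  shows "foldr rstep (rev (map inv_letter x)) x = []"
  using assms
proof (induction x)
  case Nil then show ?case by simp
next
  case (Cons a x)
  have "foldr rstep (rev (map inv_letter (a # x))) (a # x)
        = foldr rstep (rev (map inv_letter x)) (rstep (inv_letter a) (a # x))" by simp
  also have "rstep (inv_letter a) (a # x) = x" by (simp add: rstep_def)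
  finally show ?case using Cons reduced_tl by auto
qed

lemma group_free_group: "group (free_group n)"
proof (rule groupI)
  show "x \<otimes>\<^bsub>free_group n\<^esub> y \<in> carrier (free_group n)"
    if "x \<in> carrier (free_group n)" "y \<in> carrier (free_group n)" for x y
    using that set_reduce[of "x @ y"] by (auto simp: free_group_def reduced_reduce)
  show "\<one>\<^bsub>free_group n\<^esub> \<in> carrier (free_group n)" by (simp add: free_group_def)
  show "x \<otimes>\<^bsub>free_group n\<^esub> y \<otimes>\<^bsub>free_group n\<^esub> z = x \<otimes>\<^bsub>free_group n\<^esub> (y \<otimes>\<^bsub>free_group n\<^esub> z)"
    if "x \<in> carrier (free_group n)" "y \<in> carrier (free_group n)" "z \<in> carrier (free_group n)" for x y z
    using that reduced_foldr[of z y]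
    by (simp add: free_group_def reduce_append reduce_reduced reduced_reduce foldr_rstep_assoc)
  show "\<one>\<^bsub>free_group n\<^esub> \<otimes>\<^bsub>free_group n\<^esub> x = x" if "x \<in> carrier (free_group n)" for x
    using that by (simp add: free_group_def reduce_reduced)
  show "\<exists>y\<in>carrier (free_group n). y \<otimes>\<^bsub>free_group n\<^esub> x = \<one>\<^bsub>free_group n\<^esub>"
    if x: "x \<in> carrier (free_group n)" for x
  proof (intro bexI)
    let ?y = "reduce (rev (map inv_letter x))"
    have "?y \<otimes>\<^bsub>free_group n\<^esub> x = foldr rstep ?y x"
      using x by (simp add: free_group_def reduce_append reduce_reduced)
    also have "\<dots> = foldr rstep (rev (map inv_letter x)) x"
      using x foldr_rstep_assoc[of "[]" x "rev (map inv_letter x)"]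
      by (simp add: free_group_def reduce_foldr)
    also have "\<dots> = []" using x by (simp add: free_group_def foldr_rstep_inv)
    finally show "?y \<otimes>\<^bsub>free_group n\<^esub> x = \<one>\<^bsub>free_group n\<^esub>" by (simp add: free_group_def)
    show "?y \<in> carrier (free_group n)"
    proof -
      have "\<forall>l\<in>set ?y. fst l \<in> {1..n}"
      proof
        fix l assume "l \<in> set ?y"
        then have "l \<in> set (rev (map inv_letter x))" using set_reduce by blast
        then show "fst l \<in> {1..n}" using x by (auto simp: free_group_def inv_letter_def)
      qed
      then show ?thesis by (simp add: free_group_def reduced_reduce)
    qed
  qed
qed


definition sgn :: "letter \<Rightarrow> (nat \<Rightarrow>\<^sub>0 int)" where
  "sgn l = Poly_Mapping.single (fst l) (if snd l then -1 else 1)"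

definition ex :: "letter list \<Rightarrow> (nat \<Rightarrow>\<^sub>0 int)" where
  "ex w = sum_list (map sgn w)"

definition X :: "(nat \<Rightarrow>\<^sub>0 int) \<Rightarrow> laurent" where
  "X m = Poly_Mapping.single m 1"

definition cl :: "letter \<Rightarrow> laurent" where
  "cl l = (if snd l then -1 else 1)"

lemma X_mult: "X a * X b = X (a + b)"
  by (simp add: X_def mult_single)

lemma X_0: "X 0 = 1" by (simp add: X_def)

lemma ex_Nil[simp]: "ex [] = 0" and ex_Cons[simp]: "ex (l # v) = sgn l + ex v"
  and ex_append: "ex (x @ y) = ex x + ex y"
  by (simp_all add: ex_def)

lemma sgn_inv: "sgn (inv_letter a) = - sgn a"
  by (simp add: sgn_def inv_letter_def single_uminus)

lemma ex_rstep: "ex (rstep a acc) = sgn a + ex acc"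
  by (cases acc) (auto simp: rstep_def sgn_inv)

lemma ex_foldr: "ex (foldr rstep x acc) = ex x + ex acc"
  by (induction x) (simp_all add: ex_rstep add.assoc)

lemma ex_reduce: "ex (reduce x) = ex x"
  by (simp add: reduce_foldr ex_foldr)

lemma ex_mult: "ex (x \<otimes>\<^bsub>free_group n\<^esub> y) = ex x + ex y"
  by (simp add: free_group_def ex_reduce ex_append)

lemma ex_inv:
  assumes "x \<in> carrier (free_group n)"
  shows "ex (inv\<^bsub>free_group n\<^esub> x) = - ex x"
proof -
  interpret G: group "free_group n" by (rule group_free_group)
  have "ex (x \<otimes>\<^bsub>free_group n\<^esub> inv\<^bsub>free_group n\<^esub> x) = 0"
    using assms by (simp add: free_group_def[symmetric] G.r_inv) (simp add: free_group_def)
  then show ?thesis by (simp add: ex_mult eq_neg_iff_add_eq_0 add.commute)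
qed

lemma ex_derived:
  assumes "w \<in> derived (free_group n) (carrier (free_group n))"
  shows "ex w = 0"
proof -
  interpret G: group "free_group n" by (rule group_free_group)
  show ?thesis using assms unfolding derived_def
  proof (induction rule: generate.induct)
    case one then show ?case by (simp add: free_group_def)
  next
    case (incl h)
    then obtain h1 h2 where h: "h1 \<in> carrier (free_group n)" "h2 \<in> carrier (free_group n)"
      "h = h1 \<otimes>\<^bsub>free_group n\<^esub> h2 \<otimes>\<^bsub>free_group n\<^esub> inv\<^bsub>free_group n\<^esub> h1
             \<otimes>\<^bsub>free_group n\<^esub> inv\<^bsub>free_group n\<^esub> h2" by blast
    then show ?case by (simp add: ex_mult ex_inv)
  next
    case (inv h)
    then obtain h1 h2 where h: "h1 \<in> carrier (free_group n)" "h2 \<in> carrier (free_group n)"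
      "h = h1 \<otimes>\<^bsub>free_group n\<^esub> h2 \<otimes>\<^bsub>free_group n\<^esub> inv\<^bsub>free_group n\<^esub> h1
             \<otimes>\<^bsub>free_group n\<^esub> inv\<^bsub>free_group n\<^esub> h2" by blast
    then have "h \<in> carrier (free_group n)" by simp
    moreover have "ex h = 0" using h by (simp add: ex_mult ex_inv)
    ultimately show ?case by (simp add: ex_inv)
  next
    case (eng h1 h2)
    then show ?case by (simp add: ex_mult)
  qed
qed

fun Cw :: "letter list \<Rightarrow> laurent" where
  "Cw [] = 0"
| "Cw (l # v) = cl l * X (ex v) + X (- sgn l) * Cw v"

lemma letter_mat_X: "letter_mat l = (X (sgn l), 0, cl l, X (- sgn l))"
  by (simp add: letter_mat_def lvar_def X_def sgn_def cl_def single_uminus[symmetric])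

lemma mu1_Cw: "mu1 w = (X (ex w), 0, Cw w, X (- ex w))"
proof (induction w)
  case Nil then show ?case by (simp add: mu1_def mat2_id_def X_0)
next
  case (Cons l v)
  have "mu1 (l # v) = mat2_mult (letter_mat l) (mu1 v)" by (simp add: mu1_def)
  also have "\<dots> = (X (ex (l # v)), 0, Cw (l # v), X (- ex (l # v)))"
    by (simp add: Cons letter_mat_X mat2_mult_def X_mult add.commute)
  finally show ?case .
qed

fun Gs :: "(nat \<Rightarrow>\<^sub>0 int) \<Rightarrow> letter list \<Rightarrow> laurent" where
  "Gs p [] = 0"
| "Gs p (l # v) = cl l * X (- p - p - sgn l) + Gs (p + sgn l) v"

lemma Gs_shift: "Gs (p + q) v = X (- q - q) * Gs p v"
proof (induction v arbitrary: p)
  case Nil then show ?case by simp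
next
  case (Cons l v)
  have "Gs (p + q) (l # v) = cl l * X (- (p + q) - (p + q) - sgn l) + Gs (p + sgn l + q) v"
    by (simp add: add.commute add.left_commute)
  also have "\<dots> = cl l * X (- (p + q) - (p + q) - sgn l) + X (- q - q) * Gs (p + sgn l) v"
    using Cons by simp
  also have "\<dots> = X (- q - q) * Gs p (l # v)"
    by (simp add: distrib_left X_mult algebra_simps)
  finally show ?case .
qed

lemma Cw_Gs: "Cw w = X (ex w) * Gs 0 w"
proof (induction w)
  case Nil then show ?case by simp
next
  case (Cons l v)
  have g: "Gs (sgn l) v = X (- sgn l - sgn l) * Gs 0 v" using Gs_shift[of 0 "sgn l" v] by simp
  show ?case
    by (simp add: Cons g distrib_left X_mult algebra_simps)
qed


type_synonym edge = "(nat \<Rightarrow>\<^sub>0 int) \<times> nat"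

definition edge :: "(nat \<Rightarrow>\<^sub>0 int) \<Rightarrow> letter \<Rightarrow> edge" where
  "edge p l = (if snd l then p + sgn l else p, fst l)"

fun walk :: "(nat \<Rightarrow>\<^sub>0 int) \<Rightarrow> letter list \<Rightarrow> (edge \<times> bool) list" where
  "walk p [] = []"
| "walk p (l # v) = (edge p l, snd l) # walk (p + sgn l) v"

definition fE :: "edge \<Rightarrow> (nat \<Rightarrow>\<^sub>0 int)" where
  "fE E = - fst E - fst E - Poly_Mapping.single (snd E) 1"

definition cnt :: "edge \<Rightarrow> (edge \<times> bool) list \<Rightarrow> int" where
  "cnt E xs = sum_list (map (\<lambda>(E', b). if E' = E then (if b then -1 else 1) else 0) xs)"

lemma cnt_Nil[simp]: "cnt E [] = 0"
  and cnt_Cons[simp]: "cnt E ((E', b) # xs) = (if E' = E then (if b then -1 else 1) else 0) + cnt E xs"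
  and cnt_append: "cnt E (xs @ ys) = cnt E xs + cnt E ys"
  by (simp_all add: cnt_def)

lemma fE_inj: "fE E = fE E' \<Longrightarrow> E = E'"
proof -
  assume h: "fE E = fE E'"
  obtain q :: "nat \<Rightarrow>\<^sub>0 int" and i :: nat where E: "E = (q, i)" by (cases E)
  obtain q' :: "nat \<Rightarrow>\<^sub>0 int" and j :: nat where E': "E' = (q', j)" by (cases E')
  have "Poly_Mapping.lookup (fE E) i = Poly_Mapping.lookup (fE E') i" using h by simp
  then have li: "- 2 * Poly_Mapping.lookup q i - 1 = - 2 * Poly_Mapping.lookup q' i - (if j = i then 1 else 0)"
    by (simp only: E E' fE_def fst_conv snd_conv lookup_minus lookup_uminus lookup_single)
       (simp add: when_def)
  have ij: "i = j"
  proof (rule ccontr)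
    assume "i \<noteq> j"
    with li have "- 2 * Poly_Mapping.lookup q i - 1 = - 2 * Poly_Mapping.lookup q' i" by simp
    then show False by presburger
  qed
  have "q = q'"
  proof (rule poly_mapping_eqI)
    fix k
    have "Poly_Mapping.lookup (fE E) k = Poly_Mapping.lookup (fE E') k" using h by simp
    then show "Poly_Mapping.lookup q k = Poly_Mapping.lookup q' k"
      by (simp only: E E' ij fE_def fst_conv snd_conv lookup_minus lookup_uminus lookup_single)
  qed
  with ij E E' show ?thesis by simp
qed

lemma Gs_walk_term: "cl l * X (- p - p - sgn l) = Poly_Mapping.single (fE (edge p l)) (if snd l then -1 else 1)"
proof (cases "snd l")
  case True
  have "- p - p - sgn l = - (p + sgn l) - (p + sgn l) - Poly_Mapping.single (fst l) 1"
    using True by (simp add: sgn_def single_uminus algebra_simps)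
  then show ?thesis using True
    by (simp add: cl_def X_def fE_def edge_def single_uminus)
next
  case False
  then show ?thesis by (simp add: cl_def X_def fE_def edge_def sgn_def)
qed

lemma lookup_Gs: "Poly_Mapping.lookup (Gs p v) (fE E) = cnt E (walk p v)"
proof (induction v arbitrary: p)
  case Nil then show ?case by (simp add: lookup_zero)
next
  case (Cons l v)
  have "Poly_Mapping.lookup (Gs p (l # v)) (fE E) =
        Poly_Mapping.lookup (Poly_Mapping.single (fE (edge p l)) (if snd l then -1 else 1)) (fE E)
        + Poly_Mapping.lookup (Gs (p + sgn l) v) (fE E)"
    by (simp only: Gs.simps Gs_walk_term lookup_add)
  also have "\<dots> = cnt E (walk p (l # v))"
    using Cons fE_inj by (auto simp: lookup_single when_def)
  finally show ?case .
qed

lemma Gs_zero_cnt: "Gs p v = 0 \<Longrightarrow> cnt E (walk p v) = 0"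
  by (metis lookup_Gs lookup_zero)

lemma walk_edges: "(E, b) \<in> set (walk p v) \<Longrightarrow> snd E \<in> fst ` set v"
  by (induction v arbitrary: p) (auto simp: edge_def)


definition Tg :: "('a, 'b) monoid_scheme \<Rightarrow> (nat \<Rightarrow> 'a) \<Rightarrow> nat list \<Rightarrow> (nat \<Rightarrow>\<^sub>0 int) \<Rightarrow> 'a" where
  "Tg M g is p = foldr (\<lambda>i acc. (g i [^]\<^bsub>M\<^esub> (Poly_Mapping.lookup p i)) \<otimes>\<^bsub>M\<^esub> acc) is \<one>\<^bsub>M\<^esub>"

lemma Tg_Nil[simp]: "Tg M g [] p = \<one>\<^bsub>M\<^esub>"
  and Tg_Cons[simp]: "Tg M g (i # is) p = (g i [^]\<^bsub>M\<^esub> (Poly_Mapping.lookup p i)) \<otimes>\<^bsub>M\<^esub> Tg M g is p"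
  by (simp_all add: Tg_def)

lemma (in group) Tg_closed: "g ` set is \<subseteq> carrier G \<Longrightarrow> Tg G g is p \<in> carrier G"
  by (induction "is") auto

lemma (in group) Tg_zero: "Tg G g is 0 = \<one>"
  by (induction "is") auto

lemma (in group_hom) Tg_hom:
  "g ` set is \<subseteq> carrier G \<Longrightarrow> h (Tg G g is p) = Tg H (h \<circ> g) is p"
proof (induction "is")
  case Nil then show ?case by simp
next
  case (Cons i "is")
  then have gi: "g i \<in> carrier G" and r: "g ` set is \<subseteq> carrier G" by auto
  have "h (Tg G g (i # is) p) = h (g i [^]\<^bsub>G\<^esub> (Poly_Mapping.lookup p i)) \<otimes>\<^bsub>H\<^esub> h (Tg G g is p)"
    using gi r by (simp add: G.Tg_closed)
  also have "\<dots> = Tg H (h \<circ> g) (i # is) p"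
    using gi r Cons by (simp add: hom_int_pow comp_def)
  finally show ?case .
qed

lemma Tg_notin: "j \<notin> set is \<Longrightarrow> Tg M g is (p + Poly_Mapping.single j 1) = Tg M g is p"
  by (induction "is") (auto simp: lookup_add lookup_single when_def)

lemma (in comm_group) Tg_step:
  assumes "distinct is" "j \<in> set is" "g ` set is \<subseteq> carrier G"
  shows "Tg G g is (p + Poly_Mapping.single j 1) = Tg G g is p \<otimes> g j"
  using assms
proof (induction "is")
  case Nil then show ?case by simp
next
  case (Cons i "is")
  then have gi: "g i \<in> carrier G" and r: "g ` set is \<subseteq> carrier G" and gj: "g j \<in> carrier G" by auto
  show ?case
  proof (cases "i = j")
    case True
    then have nj: "j \<notin> set is" using Cons by simp
    have "Tg G g (i # is) (p + Poly_Mapping.single j 1)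
          = g j [^] (Poly_Mapping.lookup p j + 1) \<otimes> Tg G g is p"
      using True nj by (simp add: Tg_notin lookup_add)
    also have "\<dots> = g j [^] (Poly_Mapping.lookup p j) \<otimes> g j \<otimes> Tg G g is p"
      using gj by (simp add: int_pow_mult)
    also have "\<dots> = Tg G g (i # is) p \<otimes> g j"
      using True gj r by (simp add: Tg_closed m_assoc m_comm m_lcomm int_pow_closed)
    finally show ?thesis .
  next
    case False
    then have "j \<in> set is" using Cons by simp
    then have "Tg G g is (p + Poly_Mapping.single j 1) = Tg G g is p \<otimes> g j"
      using Cons r by simp
    then show ?thesis using False gi gj r
      by (simp add: lookup_add lookup_single when_def Tg_closed m_assoc)
  qed
qed

definition PPg :: "('a, 'b) monoid_scheme \<Rightarrow> (edge \<Rightarrow> 'a) \<Rightarrow> (edge \<times> bool) list \<Rightarrow> 'a" where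
  "PPg M \<gamma> xs = foldr (\<lambda>(E, b) acc. (if b then inv\<^bsub>M\<^esub> (\<gamma> E) else \<gamma> E) \<otimes>\<^bsub>M\<^esub> acc) xs \<one>\<^bsub>M\<^esub>"

lemma PPg_Nil[simp]: "PPg M \<gamma> [] = \<one>\<^bsub>M\<^esub>"
  and PPg_Cons[simp]: "PPg M \<gamma> ((E, b) # xs) = (if b then inv\<^bsub>M\<^esub> (\<gamma> E) else \<gamma> E) \<otimes>\<^bsub>M\<^esub> PPg M \<gamma> xs"
  by (simp_all add: PPg_def)

lemma (in group) PPg_closed: "\<gamma> ` fst ` set xs \<subseteq> carrier G \<Longrightarrow> PPg G \<gamma> xs \<in> carrier G"
  by (induction xs) auto

lemma (in group) PPg_append:
  "\<gamma> ` fst ` set (xs @ ys) \<subseteq> carrier G \<Longrightarrow> PPg G \<gamma> (xs @ ys) = PPg G \<gamma> xs \<otimes> PPg G \<gamma> ys"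
proof (induction xs)
  case Nil then show ?case by (simp add: PPg_closed)
next
  case (Cons x xs)
  obtain E b where x: "x = (E, b)" by (cases x)
  have a: "PPg G \<gamma> xs \<in> carrier G" "PPg G \<gamma> ys \<in> carrier G" "\<gamma> E \<in> carrier G"
    using Cons.prems x by (auto intro!: PPg_closed)
  show ?case using Cons x a by (simp add: m_assoc)
qed

lemma (in group_hom) PPg_hom:
  "\<gamma> ` fst ` set xs \<subseteq> carrier G \<Longrightarrow> h (PPg G \<gamma> xs) = PPg H (h \<circ> \<gamma>) xs"
proof (induction xs)
  case Nil then show ?case by simp
next
  case (Cons x xs)
  obtain E b where x: "x = (E, b)" by (cases x)
  show ?case using Cons x by (simp add: G.PPg_closed)
qed

lemma cnt_sign: "(E, \<not> b) \<notin> set ys \<Longrightarrow> (if b then cnt E ys \<le> 0 else cnt E ys \<ge> 0)"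
  by (induction ys) (auto split: if_splits)

lemma (in comm_group) PPg_cancel:
  "\<gamma> ` fst ` set xs \<subseteq> carrier G \<Longrightarrow> \<forall>E. cnt E xs = 0 \<Longrightarrow> PPg G \<gamma> xs = \<one>"
proof (induction "length xs" arbitrary: xs rule: less_induct)
  case less
  show ?case
  proof (cases xs)
    case Nil then show ?thesis by simp
  next
    case (Cons x ys)
    obtain E b where x: "x = (E, b)" by (cases x)
    have "cnt E xs = 0" using less.prems(2) by blast
    then have c: "cnt E ys = (if b then 1 else -1)" using Cons x
      by (cases b) auto
    have "(E, \<not> b) \<in> set ys"
    proof (rule ccontr)
      assume "(E, \<not> b) \<notin> set ys"
      from cnt_sign[OF this] c show False by (cases b) auto
    qed
    then obtain ys1 ys2 where ys: "ys = ys1 @ (E, \<not> b) # ys2" by (meson split_list)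
    have car: "\<gamma> ` fst ` set (ys1 @ ys2) \<subseteq> carrier G" and gE: "\<gamma> E \<in> carrier G"
      using less.prems(1) Cons ys x by auto
    have len: "length (ys1 @ ys2) < length xs" using Cons ys by simp
    have cnt0: "\<forall>E'. cnt E' (ys1 @ ys2) = 0"
    proof
      fix E'
      have "cnt E' xs = 0" using less.prems(2) by blast
      then show "cnt E' (ys1 @ ys2) = 0" using Cons ys x by (auto simp: cnt_append split: if_splits)
    qed
    have ih: "PPg G \<gamma> (ys1 @ ys2) = \<one>" using less.hyps[OF len car cnt0] .
    have c1: "PPg G \<gamma> ys1 \<in> carrier G" "PPg G \<gamma> ys2 \<in> carrier G"
      using car by (auto intro!: PPg_closed)
    have "PPg G \<gamma> xs = (if b then inv (\<gamma> E) else \<gamma> E) \<otimes> (PPg G \<gamma> ys1 \<otimes>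
            ((if \<not> b then inv (\<gamma> E) else \<gamma> E) \<otimes> PPg G \<gamma> ys2))"
      using Cons x ys less.prems(1) by (simp add: PPg_append)
    also have "\<dots> = PPg G \<gamma> ys1 \<otimes> PPg G \<gamma> ys2"
    proof -
      let ?c = "(if b then inv (\<gamma> E) else \<gamma> E)" and ?d = "(if \<not> b then inv (\<gamma> E) else \<gamma> E)"
      have cd: "?c \<in> carrier G" "?d \<in> carrier G" using gE by auto
      have "PPg G \<gamma> ys1 \<otimes> (?d \<otimes> PPg G \<gamma> ys2) = ?d \<otimes> (PPg G \<gamma> ys1 \<otimes> PPg G \<gamma> ys2)"
        using c1 cd by (rule_tac m_lcomm) auto
      moreover have "?c \<otimes> (?d \<otimes> Z) = Z" if "Z \<in> carrier G" for Z
        using gE that by (cases b) (simp_all add: m_assoc[symmetric])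
      ultimately show ?thesis using c1 by simp
    qed
    also have "\<dots> = \<one>" using ih car by (simp add: PPg_append)
    finally show ?thesis .
  qed
qed


abbreviation FG where "FG n \<equiv> free_group n"

definition gen :: "nat \<Rightarrow> letter list" where "gen i = [(i, False)]"

definition idx :: "nat \<Rightarrow> nat list" where "idx n = [1..<n+1]"

definition TT :: "nat \<Rightarrow> (nat \<Rightarrow>\<^sub>0 int) \<Rightarrow> letter list" where
  "TT n p = Tg (FG n) gen (idx n) p"

definition gam :: "nat \<Rightarrow> edge \<Rightarrow> letter list" where
  "gam n E = TT n (fst E) \<otimes>\<^bsub>FG n\<^esub> gen (snd E) \<otimes>\<^bsub>FG n\<^esub>
             inv\<^bsub>FG n\<^esub> (TT n (fst E + Poly_Mapping.single (snd E) 1))"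

definition prodw :: "nat \<Rightarrow> letter list \<Rightarrow> letter list" where
  "prodw n v = foldr (\<lambda>l acc. [l] \<otimes>\<^bsub>FG n\<^esub> acc) v \<one>\<^bsub>FG n\<^esub>"

lemma set_idx: "set (idx n) = {1..n}" by (auto simp: idx_def)

lemma gen_carrier: "i \<in> {1..n} \<Longrightarrow> gen i \<in> carrier (FG n)"
  by (simp add: gen_def free_group_def)

lemma gen_idx: "gen ` set (idx n) \<subseteq> carrier (FG n)"
  using gen_carrier set_idx by blast

lemma TT_carrier: "TT n p \<in> carrier (FG n)"
proof -
  interpret G: group "FG n" by (rule group_free_group)
  show ?thesis unfolding TT_def by (rule G.Tg_closed[OF gen_idx])
qed

lemma inv_gen: "i \<in> {1..n} \<Longrightarrow> inv\<^bsub>FG n\<^esub> (gen i) = [(i, True)]"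
proof -
  interpret G: group "FG n" by (rule group_free_group)
  assume i: "i \<in> {1..n}"
  show ?thesis
  proof (rule G.inv_equality)
    show "[(i, True)] \<otimes>\<^bsub>FG n\<^esub> gen i = \<one>\<^bsub>FG n\<^esub>"
      by (simp add: free_group_def gen_def reduce_foldr rstep_def inv_letter_def)
    show "gen i \<in> carrier (FG n)" using i by (rule gen_carrier)
    show "[(i, True)] \<in> carrier (FG n)" using i by (simp add: free_group_def)
  qed
qed

lemma prodw_reduce: "prodw n v = reduce v"
proof (induction v)
  case Nil then show ?case by (simp add: prodw_def free_group_def reduce_def)
next
  case (Cons l v)
  have "prodw n (l # v) = reduce ([l] @ reduce v)"
    using Cons by (simp add: prodw_def free_group_def)
  also have "\<dots> = rstep l (reduce (reduce v))"
    by (simp add: reduce_foldr)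
  also have "\<dots> = rstep l (reduce v)"
    by (simp add: reduce_reduced reduced_reduce)
  also have "\<dots> = reduce (l # v)" by (simp add: reduce_foldr)
  finally show ?case .
qed

lemma reduce_carrier: "\<forall>l\<in>set v. fst l \<in> {1..n} \<Longrightarrow> reduce v \<in> carrier (FG n)"
  using set_reduce[of v] by (auto simp: free_group_def reduced_reduce)

lemma regroup:
  assumes "group M" "A \<in> carrier M" "B \<in> carrier M" "C \<in> carrier M" "D \<in> carrier M" "E \<in> carrier M"
  shows "A \<otimes>\<^bsub>M\<^esub> (B \<otimes>\<^bsub>M\<^esub> C) \<otimes>\<^bsub>M\<^esub> inv\<^bsub>M\<^esub> E =
         (A \<otimes>\<^bsub>M\<^esub> B \<otimes>\<^bsub>M\<^esub> inv\<^bsub>M\<^esub> D) \<otimes>\<^bsub>M\<^esub> (D \<otimes>\<^bsub>M\<^esub> C \<otimes>\<^bsub>M\<^esub> inv\<^bsub>M\<^esub> E)"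
proof -
  interpret M: group M by fact
  have key: "inv\<^bsub>M\<^esub> D \<otimes>\<^bsub>M\<^esub> (D \<otimes>\<^bsub>M\<^esub> Y) = Y" if "Y \<in> carrier M" for Y
    using assms that by (simp add: M.m_assoc[symmetric])
  show ?thesis using assms by (simp add: M.m_assoc key)
qed

lemma gam_step:
  assumes "fst l \<in> {1..n}"
  shows "TT n p \<otimes>\<^bsub>FG n\<^esub> [l] \<otimes>\<^bsub>FG n\<^esub> inv\<^bsub>FG n\<^esub> (TT n (p + sgn l))
         = (if snd l then inv\<^bsub>FG n\<^esub> (gam n (edge p l)) else gam n (edge p l))"
proof -
  interpret G: group "FG n" by (rule group_free_group)
  obtain i b where l: "l = (i, b)" by (cases l)
  have i: "i \<in> {1..n}" using assms l by simp
  show ?thesis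
  proof (cases b)
    case False
    then show ?thesis using l by (simp add: gam_def edge_def sgn_def gen_def)
  next
    case True
    then have l': "l = (i, True)" using l by simp
    let ?q = "p + sgn (i, True)"
    have q: "?q + Poly_Mapping.single i 1 = p"
      by (simp add: sgn_def add.assoc single_add[symmetric])
    have "inv\<^bsub>FG n\<^esub> (gam n (edge p l))
          = inv\<^bsub>FG n\<^esub> (TT n ?q \<otimes>\<^bsub>FG n\<^esub> gen i \<otimes>\<^bsub>FG n\<^esub> inv\<^bsub>FG n\<^esub> (TT n (?q + Poly_Mapping.single i 1)))"
      unfolding l' by (simp add: gam_def edge_def)
    also have "\<dots> = inv\<^bsub>FG n\<^esub> (TT n ?q \<otimes>\<^bsub>FG n\<^esub> gen i \<otimes>\<^bsub>FG n\<^esub> inv\<^bsub>FG n\<^esub> (TT n p))"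
      by (simp only: q)
    also have "\<dots> = TT n p \<otimes>\<^bsub>FG n\<^esub> inv\<^bsub>FG n\<^esub> (gen i) \<otimes>\<^bsub>FG n\<^esub> inv\<^bsub>FG n\<^esub> (TT n ?q)"
      using gen_carrier[OF i] TT_carrier by (simp add: G.inv_mult_group G.m_assoc)
    also have "\<dots> = TT n p \<otimes>\<^bsub>FG n\<^esub> [l] \<otimes>\<^bsub>FG n\<^esub> inv\<^bsub>FG n\<^esub> (TT n (p + sgn l))"
      using inv_gen[OF i] l' by simp
    finally show ?thesis using True l by simp
  qed
qed

lemma telescope:
  assumes "\<forall>l\<in>set v. fst l \<in> {1..n}"
  shows "TT n p \<otimes>\<^bsub>FG n\<^esub> prodw n v \<otimes>\<^bsub>FG n\<^esub> inv\<^bsub>FG n\<^esub> (TT n (p + ex v))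
         = PPg (FG n) (gam n) (walk p v)"
  using assms
proof (induction v arbitrary: p)
  case Nil
  interpret G: group "FG n" by (rule group_free_group)
  show ?case using TT_carrier
    by (simp add: prodw_def)
next
  case (Cons l v)
  interpret G: group "FG n" by (rule group_free_group)
  let ?q = "p + sgn l"
  have lc: "[l] \<in> carrier (FG n)" using Cons.prems by (simp add: free_group_def)
  have pc: "prodw n v \<in> carrier (FG n)" using Cons.prems by (simp add: prodw_reduce reduce_carrier)
  have "TT n p \<otimes>\<^bsub>FG n\<^esub> prodw n (l # v) \<otimes>\<^bsub>FG n\<^esub> inv\<^bsub>FG n\<^esub> (TT n (p + ex (l # v)))
        = TT n p \<otimes>\<^bsub>FG n\<^esub> ([l] \<otimes>\<^bsub>FG n\<^esub> prodw n v) \<otimes>\<^bsub>FG n\<^esub> inv\<^bsub>FG n\<^esub> (TT n (?q + ex v))"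
    by (simp add: prodw_def add.assoc)
  also have "\<dots> = (TT n p \<otimes>\<^bsub>FG n\<^esub> [l] \<otimes>\<^bsub>FG n\<^esub> inv\<^bsub>FG n\<^esub> (TT n ?q)) \<otimes>\<^bsub>FG n\<^esub>
                  (TT n ?q \<otimes>\<^bsub>FG n\<^esub> prodw n v \<otimes>\<^bsub>FG n\<^esub> inv\<^bsub>FG n\<^esub> (TT n (?q + ex v)))"
    by (rule regroup[OF group_free_group TT_carrier lc pc TT_carrier TT_carrier])
  also have "\<dots> = PPg (FG n) (gam n) (walk p (l # v))"
    using Cons gam_step[of l n p] by simp
  finally show ?case .
qed


lemma (in group) PPg_consistent:
  assumes "subgroup H G"
  shows "\<gamma> ` fst ` set xs \<subseteq> H \<Longrightarrow> PPg (G\<lparr>carrier := H\<rparr>) \<gamma> xs = PPg G \<gamma> xs"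
proof (induction xs)
  case Nil then show ?case by simp
next
  case (Cons x xs)
  obtain E b where x: "x = (E, b)" by (cases x)
  show ?case using Cons x assms by simp
qed

lemma gam_derived:
  assumes i: "i \<in> {1..n}"
  shows "gam n (q, i) \<in> derived (FG n) (carrier (FG n))"
proof -
  interpret G: group "FG n" by (rule group_free_group)
  let ?N = "derived (FG n) (carrier (FG n))"
  interpret Nn: normal ?N "FG n" by (rule G.derived_self_is_normal)
  let ?Q = "FG n Mod ?N"
  interpret Q: comm_group ?Q by (rule G.derived_quot_is_comm_group)
  let ?h = "\<lambda>a. ?N #>\<^bsub>FG n\<^esub> a"
  interpret hm: group_hom "FG n" ?Q ?h
    by (rule group_hom.intro[OF group_free_group Q.is_group])
       (simp add: group_hom_axioms_def Nn.r_coset_hom_Mod)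
  have gi: "gen i \<in> carrier (FG n)" by (rule gen_carrier[OF i])
  have hc: "(?h \<circ> gen) ` set (idx n) \<subseteq> carrier ?Q"
    using hm.hom_closed gen_idx[of n] by (auto simp: image_subset_iff)
  have hT: "?h (TT n p) = Tg ?Q (?h \<circ> gen) (idx n) p" for p
    unfolding TT_def by (rule hm.Tg_hom[OF gen_idx])
  have step0: "Tg ?Q (?h \<circ> gen) (idx n) (q + Poly_Mapping.single i 1)
              = Tg ?Q (?h \<circ> gen) (idx n) q \<otimes>\<^bsub>?Q\<^esub> (?h \<circ> gen) i"
    by (rule Q.Tg_step[OF _ _ hc]) (use i in \<open>auto simp: idx_def\<close>)
  have step: "Tg ?Q (?h \<circ> gen) (idx n) (q + Poly_Mapping.single i 1)
              = Tg ?Q (?h \<circ> gen) (idx n) q \<otimes>\<^bsub>?Q\<^esub> ?h (gen i)"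
    using step0 by simp
  have Yc: "Tg ?Q (?h \<circ> gen) (idx n) q \<otimes>\<^bsub>?Q\<^esub> ?h (gen i) \<in> carrier ?Q"
    by (rule Q.m_closed[OF Q.Tg_closed[OF hc] hm.hom_closed[OF gi]])
  let ?s = "q + Poly_Mapping.single i 1"
  have "?h (gam n (q, i)) = ?h (TT n q \<otimes>\<^bsub>FG n\<^esub> gen i) \<otimes>\<^bsub>?Q\<^esub> ?h (inv\<^bsub>FG n\<^esub> TT n ?s)"
    unfolding gam_def fst_conv snd_conv
    by (rule hm.hom_mult[OF G.m_closed[OF TT_carrier gi] G.inv_closed[OF TT_carrier]])
  also have "\<dots> = ?h (TT n q) \<otimes>\<^bsub>?Q\<^esub> ?h (gen i) \<otimes>\<^bsub>?Q\<^esub> inv\<^bsub>?Q\<^esub> (?h (TT n ?s))"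
    by (simp only: hm.hom_mult[OF TT_carrier gi] hm.hom_inv[OF TT_carrier])
  also have "\<dots> = (Tg ?Q (?h \<circ> gen) (idx n) q \<otimes>\<^bsub>?Q\<^esub> ?h (gen i)) \<otimes>\<^bsub>?Q\<^esub>
                   inv\<^bsub>?Q\<^esub> (Tg ?Q (?h \<circ> gen) (idx n) q \<otimes>\<^bsub>?Q\<^esub> ?h (gen i))"
    by (simp only: hT step)
  also have "\<dots> = \<one>\<^bsub>?Q\<^esub>" by (rule Q.r_inv[OF Yc])
  finally have "?h (gam n (q, i)) = \<one>\<^bsub>?Q\<^esub>" .
  then have eq: "?N #>\<^bsub>FG n\<^esub> gam n (q, i) = ?N" by simp
  have gc: "gam n (q, i) \<in> carrier (FG n)" unfolding gam_def using TT_carrier gi by simp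
  show ?thesis using G.rcos_self[OF gc Nn.subgroup_axioms] eq by simp
qed

lemma PPg_derived2:
  assumes g: "\<forall>E\<in>fst ` set xs. gam n E \<in> derived (FG n) (carrier (FG n))"
    and c: "\<forall>E. cnt E xs = 0"
  shows "PPg (FG n) (gam n) xs \<in> derived (FG n) (derived (FG n) (carrier (FG n)))"
proof -
  interpret G: group "FG n" by (rule group_free_group)
  let ?H = "derived (FG n) (carrier (FG n))"
  have sH: "subgroup ?H (FG n)" by (rule G.derived_is_subgroup) simp
  let ?G' = "(FG n)\<lparr>carrier := ?H\<rparr>"
  let ?K = "derived (FG n) ?H"
  interpret Kn: normal ?K ?G' by (rule G.derived_subgroup_is_normal[OF sH])
  let ?Q = "?G' Mod ?K"
  interpret Q: comm_group ?Q by (rule G.derived_quot_of_subgroup_is_comm_group[OF sH])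
  let ?h = "\<lambda>a. ?K #>\<^bsub>?G'\<^esub> a"
  interpret hm: group_hom ?G' ?Q ?h
    by (rule group_hom.intro[OF Kn.is_group Q.is_group])
       (unfold group_hom_axioms_def, rule Kn.r_coset_hom_Mod)
  have gH: "gam n ` fst ` set xs \<subseteq> carrier ?G'" using g by auto
  have "PPg (FG n) (gam n) xs = PPg ?G' (gam n) xs"
    using G.PPg_consistent[OF sH] gH by simp
  moreover have "?h (PPg ?G' (gam n) xs) = PPg ?Q (?h \<circ> gam n) xs"
    by (rule hm.PPg_hom[OF gH])
  moreover have "PPg ?Q (?h \<circ> gam n) xs = \<one>\<^bsub>?Q\<^esub>"
    using Q.PPg_cancel[of "?h \<circ> gam n" xs] hm.hom_closed gH c by auto
  ultimately have eq: "?K #>\<^bsub>?G'\<^esub> PPg (FG n) (gam n) xs = ?K" by simp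
  have xc: "PPg (FG n) (gam n) xs \<in> carrier ?G'"
    using Kn.PPg_closed[OF gH] G.PPg_consistent[OF sH] gH by simp
  show ?thesis using Kn.rcos_self[OF xc Kn.subgroup_axioms] eq by simp
qed

theorem lemma5p1:
  fixes n :: nat and w :: "letter list"
  assumes "n \<ge> 2"
    and "w \<in> derived (free_group n) (carrier (free_group n))"
    and "w \<notin> derived (free_group n) (derived (free_group n) (carrier (free_group n)))"
  shows "\<exists>L :: laurent. L \<noteq> 0 \<and> mu1 w = (1, 0, L, 1)"
proof -
  interpret G: group "FG n" by (rule group_free_group)
  have wc: "w \<in> carrier (FG n)"
    using assms(2) G.derived_in_carrier[of "carrier (FG n)"] by auto
  then have wl: "\<forall>l\<in>set w. fst l \<in> {1..n}" and wr: "reduced w" by (auto simp: free_group_def)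
  have e0: "ex w = 0" by (rule ex_derived[OF assms(2)])
  have mu: "mu1 w = (1, 0, Gs 0 w, 1)"
    using mu1_Cw[of w] Cw_Gs[of w] e0 by (simp add: X_0)
  have "Gs 0 w \<noteq> 0"
  proof
    assume z: "Gs 0 w = 0"
    then have c: "\<forall>E. cnt E (walk 0 w) = 0" using Gs_zero_cnt by blast
    have "w = prodw n w" using wr by (simp add: prodw_reduce reduce_reduced)
    also have "\<dots> = TT n 0 \<otimes>\<^bsub>FG n\<^esub> prodw n w \<otimes>\<^bsub>FG n\<^esub> inv\<^bsub>FG n\<^esub> (TT n (0 + ex w))"
      using wc wr e0 by (simp add: TT_def G.Tg_zero prodw_reduce reduce_reduced)
    also have "\<dots> = PPg (FG n) (gam n) (walk 0 w)"
      by (rule telescope[OF wl])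
    finally have w: "w = PPg (FG n) (gam n) (walk 0 w)" .
    have "\<forall>E\<in>fst ` set (walk 0 w). gam n E \<in> derived (FG n) (carrier (FG n))"
    proof
      fix E assume "E \<in> fst ` set (walk 0 w)"
      then obtain b where "(E, b) \<in> set (walk 0 w)" by force
      then have "snd E \<in> fst ` set w" by (rule walk_edges)
      then have "snd E \<in> {1..n}" using wl by auto
      then show "gam n E \<in> derived (FG n) (carrier (FG n))"
        using gam_derived[of "snd E" n "fst E"] by simp
    qed
    from PPg_derived2[OF this c] w assms(3) show False by simp
  qed
  with mu show ?thesis by blast
qed

end
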